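(* Let $X$ be a finite-dimensional (real or complex) CL-space with an absolute norm and let $m$ be a positive integer. If $y_1,\dots,y_m$ are extreme points of $B_X$ all of whose coordinates are nonnegative real numbers, then $\frac1m\sum_{j=1}^my_j\in\tilde\rho\,\mathcal{P}({}^mX)$; that is, there is a nonzero $Q\in\mathcal{P}({}^mX)$ which strongly attains its norm at $\frac1m\sum_{j=1}^my_j$.
   Context: $X$ is $\mathbb{F}^n$ ($\mathbb{F}=\mathbb{R}$ or $\mathbb{C}$) with a norm that is absolute: $\|(a_1,\dots,a_n)\|=\|(|a_1|,\dots,|a_n|)\|$ and $\|e_j\|=1$ for the canonical basis vectors. A Banach space is a CL-space if its unit ball is the absolutely convex hull of every maximal convex subset of its unit sphere; in finite dimensions, equivalently, $|x^*(x)|=1$ for every extreme point $x^*$ of $B_{X^*}$ and every extreme point $x$ of $B_X$. $\mathcal{P}({}^mX)$ is the space of $m$-homogeneous scalar polynomials on $X$ with norm $\|Q\|=\sup_{x\in B_X}|Q(x)|$. A nonzero $Q$ strongly attains its norm at $x\in B_X$ if for every sequence $\{x_n\}\subset B_X$ with $|Q(x_n)|\to\|Q\|$ there are a scalar $\lambda$ with $|\lambda|=1$ and a subsequence of $\{x_n\}$ converging to $\lambda x$; $\tilde\rho\,\mathcal{P}({}^mX)$ is the set of all points at which some nonzero element of $\mathcal{P}({}^mX)$ strongly attains its norm. *)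

theory Defs
  imports "HOL-Analysis.Analysis"
begin

text \<open>The space X = F^n (F = real or complex) is modelled as 'a ^ 'n, equipped with an
  arbitrary norm N (a real-valued function satisfying the norm axioms).\<close>

definition is_norm_on :: "('a::real_normed_field ^ 'n::finite \<Rightarrow> real) \<Rightarrow> bool" where
  "is_norm_on N \<longleftrightarrow>
     (\<forall>x. 0 \<le> N x) \<and> (\<forall>x. N x = 0 \<longleftrightarrow> x = 0) \<and>
     (\<forall>c x. N (c *s x) = norm c * N x) \<and> (\<forall>x y. N (x + y) \<le> N x + N y)"

definition absolute_norm :: "('a::real_normed_field ^ 'n::finite \<Rightarrow> real) \<Rightarrow> bool" where
  "absolute_norm N \<longleftrightarrow> is_norm_on N \<and>
     (\<forall>x. N x = N (\<chi> i. of_real (norm (x $ i)))) \<and> (\<forall>j. N (axis j 1) = 1)"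

definition unit_ball :: "('a::real_normed_field ^ 'n::finite \<Rightarrow> real) \<Rightarrow> ('a ^ 'n) set" where
  "unit_ball N = {x. N x \<le> 1}"

text \<open>Linear functionals on F^n are represented by vectors f, acting as x \<mapsto> sum_i f_i x_i.\<close>
definition pair :: "'a::real_normed_field ^ 'n::finite \<Rightarrow> 'a ^ 'n \<Rightarrow> 'a" where
  "pair f x = (\<Sum>i\<in>UNIV. f $ i * x $ i)"

definition dual_norm :: "('a::real_normed_field ^ 'n::finite \<Rightarrow> real) \<Rightarrow> 'a ^ 'n \<Rightarrow> real" where
  "dual_norm N f = Sup ((\<lambda>x. norm (pair f x)) ` unit_ball N)"

definition dual_unit_ball :: "('a::real_normed_field ^ 'n::finite \<Rightarrow> real) \<Rightarrow> ('a ^ 'n) set" where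
  "dual_unit_ball N = {f. dual_norm N f \<le> 1}"

definition CL_space :: "('a::real_normed_field ^ 'n::finite \<Rightarrow> real) \<Rightarrow> bool" where
  "CL_space N \<longleftrightarrow> (\<forall>f x. f extreme_point_of dual_unit_ball N \<longrightarrow> x extreme_point_of unit_ball N
      \<longrightarrow> norm (pair f x) = 1)"

definition multi_indices :: "nat \<Rightarrow> ('n::finite \<Rightarrow> nat) set" where
  "multi_indices m = {\<alpha>. (\<Sum>i\<in>UNIV. \<alpha> i) = m}"

definition homog_poly :: "nat \<Rightarrow> ('a::real_normed_field ^ 'n::finite \<Rightarrow> 'a) \<Rightarrow> bool" where
  "homog_poly m Q \<longleftrightarrow> (\<exists>c :: ('n \<Rightarrow> nat) \<Rightarrow> 'a.
      Q = (\<lambda>x. \<Sum>\<alpha>\<in>multi_indices m. c \<alpha> * (\<Prod>i\<in>UNIV. (x $ i) ^ \<alpha> i)))"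

definition poly_norm :: "('a::real_normed_field ^ 'n::finite \<Rightarrow> real) \<Rightarrow> ('a ^ 'n \<Rightarrow> 'a) \<Rightarrow> real" where
  "poly_norm N Q = Sup ((\<lambda>x. norm (Q x)) ` unit_ball N)"

definition strongly_attains_at ::
  "('a::real_normed_field ^ 'n::finite \<Rightarrow> real) \<Rightarrow> ('a ^ 'n \<Rightarrow> 'a) \<Rightarrow> 'a ^ 'n \<Rightarrow> bool" where
  "strongly_attains_at N Q x \<longleftrightarrow> x \<in> unit_ball N \<and> Q \<noteq> (\<lambda>_. 0) \<and>
     (\<forall>s :: nat \<Rightarrow> 'a ^ 'n. (\<forall>k. s k \<in> unit_ball N) \<and>
        (\<lambda>k. norm (Q (s k))) \<longlonglongrightarrow> poly_norm N Q \<longrightarrow>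
        (\<exists>l::'a. norm l = 1 \<and> (\<exists>r. strict_mono r \<and> (s \<circ> r) \<longlonglongrightarrow> l *s x)))"

definition rho_tilde :: "('a::real_normed_field ^ 'n::finite \<Rightarrow> real) \<Rightarrow> nat \<Rightarrow> ('a ^ 'n) set" where
  "rho_tilde N m = {x. \<exists>Q. homog_poly m Q \<and> Q \<noteq> (\<lambda>_. 0) \<and> strongly_attains_at N Q x}"

definition thm45_claim :: "'a::real_normed_field itself \<Rightarrow> 'n::finite itself \<Rightarrow> bool" where
  "thm45_claim _ _ \<longleftrightarrow>
    (\<forall>(N :: 'a ^ 'n \<Rightarrow> real) (m::nat) (y :: nat \<Rightarrow> 'a ^ 'n).
       absolute_norm N \<longrightarrow> CL_space N \<longrightarrow> 0 < m \<longrightarrow>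
       (\<forall>j<m. y j extreme_point_of unit_ball N \<and> (\<forall>i. \<exists>r::real. 0 \<le> r \<and> y j $ i = of_real r)) \<longrightarrow>
       (of_real (1 / real m) :: 'a) *s (\<Sum>j<m. y j) \<in> rho_tilde N m)"

end

theory Submission
  imports Defs
begin

lemma vec_decomp: "x = (\<Sum>i\<in>UNIV. (x $ i) *s axis i (1::'a::comm_ring_1))"
  by (simp add: vec_eq_iff sum_component axis_def if_distrib cong: if_cong)

lemma scaleR_vec_smult: "(u *\<^sub>R (x::'a::real_algebra_1^'n)) = (of_real u) *s x"
  by (simp add: vec_eq_iff scaleR_conv_of_real[where 'a='a])

definition dmul :: "'a::real_normed_field^'n::finite \<Rightarrow> 'a^'n \<Rightarrow> 'a^'n" where
  "dmul d x = (\<chi> i. d $ i * x $ i)"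

lemma dmul_nth[simp]: "dmul d x $ i = d $ i * x $ i" by (simp add: dmul_def)

lemma linear_dmul: "linear (dmul d)"
  by (rule linearI) (simp_all add: vec_eq_iff algebra_simps mult_scaleR_right)

definition unimod :: "'a::real_normed_field^'n::finite \<Rightarrow> bool" where
  "unimod d \<longleftrightarrow> (\<forall>i. norm (d $ i) = 1)"

definition dinv :: "'a::real_normed_field^'n::finite \<Rightarrow> 'a^'n" where
  "dinv d = (\<chi> i. inverse (d $ i))"

lemma unimod_dinv: "unimod d \<Longrightarrow> unimod (dinv d)"
  by (simp add: unimod_def dinv_def norm_inverse)

lemma dmul_dinv1: "unimod d \<Longrightarrow> dmul (dinv d) (dmul d x) = x"
proof -
  assume u: "unimod d"
  have "d $ i \<noteq> 0" for i using u unfolding unimod_def by (metis norm_zero zero_neq_one)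
  then show ?thesis by (simp add: vec_eq_iff dinv_def mult.assoc[symmetric])
qed

lemma dmul_dinv2: "unimod d \<Longrightarrow> dmul d (dmul (dinv d) x) = x"
proof -
  assume u: "unimod d"
  have "d $ i \<noteq> 0" for i using u unfolding unimod_def by (metis norm_zero zero_neq_one)
  then show ?thesis by (simp add: vec_eq_iff dinv_def mult.assoc[symmetric])
qed

lemma pair_dmul: "pair (dmul d f) x = pair f (dmul d x)"
  by (simp add: pair_def algebra_simps)

lemma extreme_transfer:
  assumes "linear T" "linear T'" "\<And>x. T' (T x) = x" "\<And>x. T (T' x) = x"
    "\<And>x. x \<in> S \<Longrightarrow> T x \<in> S" "\<And>x. x \<in> S \<Longrightarrow> T' x \<in> S" "y extreme_point_of S"
  shows "T y extreme_point_of S"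
proof -
  have inj: "inj T'" by (metis assms(4) injI)
  have yS: "y \<in> S" using assms(7) extreme_point_of_def by blast
  show ?thesis unfolding extreme_point_of_def
  proof (intro conjI ballI)
    show "T y \<in> S" using assms(5) yS by blast
    fix a b assume ab: "a \<in> S" "b \<in> S"
    show "T y \<notin> open_segment a b"
    proof
      assume "T y \<in> open_segment a b"
      then have "T' (T y) \<in> T' ` open_segment a b" by blast
      then have "y \<in> open_segment (T' a) (T' b)"
        using open_segment_linear_image[OF assms(2) inj] assms(3) by simp
      moreover have "T' a \<in> S" "T' b \<in> S" using ab assms(6) by auto
      ultimately show False using assms(7) unfolding extreme_point_of_def by blast
    qed
  qed
qed

definition rvec :: "('n::finite \<Rightarrow> real) \<Rightarrow> 'a::real_normed_field^'n" where
  "rvec r = (\<chi> k. of_real (r k))"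

lemma rvec_nth[simp]: "rvec r $ k = of_real (r k)" by (simp add: rvec_def)

lemma pair_rvec: "pair (rvec a) (rvec b :: 'a::real_normed_field^'n::finite) = of_real (\<Sum>k\<in>UNIV. a k * b k)"
  by (simp add: pair_def)

lemma absify: "\<exists>d. unimod d \<and> dmul d f = (rvec (\<lambda>k. norm (f $ k)) :: 'a::real_normed_field^'n::finite)"
proof -
  define d :: "'a^'n" where "d = (\<chi> k. if f $ k = 0 then 1 else of_real (norm (f $ k)) / f $ k)"
  have "unimod d" by (simp add: unimod_def d_def norm_divide)
  moreover have "dmul d f = rvec (\<lambda>k. norm (f $ k))" by (simp add: vec_eq_iff d_def)
  ultimately show ?thesis by blast
qed

locale absn =
  fixes N :: "'a::{real_normed_field,euclidean_space} ^ 'n::finite \<Rightarrow> real"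
  assumes absN: "absolute_norm N"
begin

lemma N_nonneg: "0 \<le> N x" and N_eq0: "N x = 0 \<longleftrightarrow> x = 0"
  and N_smult: "N (c *s x) = norm c * N x" and N_add: "N (x + y) \<le> N x + N y"
  and N_abs: "N x = N (\<chi> i. of_real (norm (x $ i)))" and N_axis: "N (axis j 1) = 1"
  using absN by (auto simp: absolute_norm_def is_norm_on_def)

lemma N_0[simp]: "N 0 = 0" using N_eq0 by simp

lemma N_scaleR: "N (u *\<^sub>R x) = \<bar>u\<bar> * N x"
  by (simp add: scaleR_vec_smult N_smult)

lemma N_neg: "N (- x) = N x"
  using N_smult[of "-1" x] by simp

lemma N_diff_sym: "N (x - y) = N (y - x)"
  by (metis N_neg minus_diff_eq)

lemma N_sum: "N (sum f A) \<le> (\<Sum>a\<in>A. N (f a))"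
proof (cases "finite A")
  case True then show ?thesis
    by (induction A rule: finite_induct) (auto intro: order_trans[OF N_add])
next
  case False then show ?thesis by simp
qed

lemma N_cong: "(\<And>i. norm (x $ i) = norm (y $ i)) \<Longrightarrow> N x = N y"
  by (subst N_abs, subst (2) N_abs) simp

lemma N_le_l1: "N x \<le> (\<Sum>i\<in>UNIV. norm (x $ i))"
proof -
  have "N x = N (\<Sum>i\<in>UNIV. (x $ i) *s axis i 1)" using vec_decomp[of x] by simp
  also have "\<dots> \<le> (\<Sum>i\<in>UNIV. N ((x $ i) *s axis i 1))" by (rule N_sum)
  also have "\<dots> = (\<Sum>i\<in>UNIV. norm (x $ i))" by (simp add: N_smult N_axis)
  finally show ?thesis .
qed

lemma N_le_norm: "N x \<le> real CARD('n) * norm x"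
proof -
  have "(\<Sum>i\<in>UNIV. norm (x $ i)) \<le> (\<Sum>i\<in>(UNIV::'n set). norm x)"
    by (rule sum_mono) (rule Finite_Cartesian_Product.norm_nth_le)
  then show ?thesis using N_le_l1[of x] by simp
qed

lemma comp_le_N: "norm (x $ k) \<le> N x"
proof -
  define x' where "x' = (\<chi> i. (if i = k then 1 else -1) * x $ i)"
  have "N x' = N x" by (rule N_cong) (simp add: x'_def norm_mult)
  have "x + x' = (2 * x $ k) *s axis k 1"
    by (simp add: x'_def vec_eq_iff axis_def)
  then have "N (x + x') = 2 * norm (x $ k)" by (simp add: N_smult N_axis norm_mult)
  moreover have "N (x + x') \<le> 2 * N x" using N_add[of x x'] \<open>N x' = N x\<close> by simp
  ultimately show ?thesis by simp
qed

lemma norm_le_N: "norm x \<le> real CARD('n) * N x"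
proof -
  have "norm x \<le> (\<Sum>i\<in>UNIV. norm (x $ i))"
    unfolding norm_vec_def by (rule L2_set_le_sum) simp
  also have "\<dots> \<le> (\<Sum>i\<in>(UNIV::'n set). N x)" by (intro sum_mono comp_le_N)
  finally show ?thesis by simp
qed

lemma N_lipschitz: "(real CARD('n))-lipschitz_on UNIV N"
proof (rule lipschitz_onI)
  fix x y
  have "N x \<le> N y + N (x - y)" using N_add[of y "x - y"] by simp
  moreover have "N y \<le> N x + N (y - x)" using N_add[of x "y - x"] by simp
  ultimately have "\<bar>N x - N y\<bar> \<le> N (x - y)" using N_diff_sym[of x y] by linarith
  also have "\<dots> \<le> real CARD('n) * norm (x - y)" by (rule N_le_norm)
  finally show "dist (N x) (N y) \<le> real CARD('n) * dist x y" by (simp add: dist_norm dist_real_def)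
qed simp

lemma N_cont: "continuous_on UNIV N"
  using N_lipschitz by (rule lipschitz_on_continuous_on)

lemma B_closed: "closed (unit_ball N)"
  unfolding unit_ball_def by (rule closed_Collect_le[OF N_cont]) simp

lemma B_bounded: "bounded (unit_ball N)"
proof -
  have "unit_ball N \<subseteq> cball 0 (real CARD('n))"
  proof
    fix x assume "x \<in> unit_ball N"
    then have "N x \<le> 1" by (simp add: unit_ball_def)
    then show "x \<in> cball 0 (real CARD('n))"
      using norm_le_N[of x] by (auto simp: dist_norm intro: order_trans mult_left_le)
  qed
  then show ?thesis using bounded_cball bounded_subset by blast
qed

lemma B_compact: "compact (unit_ball N)"
  using B_closed B_bounded compact_eq_bounded_closed by blast

lemma B_convex: "convex (unit_ball N)"
  unfolding convex_def unit_ball_def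
proof (clarify)
  fix x y :: "'a^'n" and u v :: real
  assume "N x \<le> 1" "N y \<le> 1" "0 \<le> u" "0 \<le> v" "u + v = 1"
  have "N (u *\<^sub>R x + v *\<^sub>R y) \<le> u * N x + v * N y"
    using N_add[of "u *\<^sub>R x" "v *\<^sub>R y"] \<open>0 \<le> u\<close> \<open>0 \<le> v\<close> by (simp add: N_scaleR)
  also have "\<dots> \<le> u * 1 + v * 1"
    using \<open>N x \<le> 1\<close> \<open>N y \<le> 1\<close> \<open>0 \<le> u\<close> \<open>0 \<le> v\<close> by (intro add_mono mult_left_mono) auto
  finally show "N (u *\<^sub>R x + v *\<^sub>R y) \<le> 1" using \<open>u + v = 1\<close> by simp
qed


lemma B_zero: "0 \<in> unit_ball N" by (simp add: unit_ball_def)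

lemma B_comp: "x \<in> unit_ball N \<Longrightarrow> norm (x $ k) \<le> 1"
  using comp_le_N[of x k] by (simp add: unit_ball_def)

lemma axis_B: "axis k 1 \<in> unit_ball N" by (simp add: unit_ball_def N_axis)

lemma pair_axis: "pair f (axis k 1) = f $ k"
  by (simp add: pair_def axis_def if_distrib cong: if_cong)

lemma pair_axis2: "pair (axis k 1) x = x $ k"
proof -
  have "(\<Sum>i\<in>UNIV. axis k 1 $ i * x $ i) = (\<Sum>i\<in>UNIV. if i = k then x $ i else 0)"
    by (rule sum.cong) (auto simp: axis_def)
  then show ?thesis by (simp add: pair_def)
qed

lemma pair_bound: "x \<in> unit_ball N \<Longrightarrow> norm (pair f x) \<le> (\<Sum>i\<in>UNIV. norm (f $ i))"
proof -
  assume x: "x \<in> unit_ball N"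
  have "norm (pair f x) \<le> (\<Sum>i\<in>UNIV. norm (f $ i * x $ i))"
    unfolding pair_def by (rule norm_sum)
  also have "\<dots> \<le> (\<Sum>i\<in>UNIV. norm (f $ i))"
    using B_comp[OF x] by (intro sum_mono) (simp add: norm_mult mult_left_le)
  finally show ?thesis .
qed

lemma bdd_pair: "bdd_above ((\<lambda>x. norm (pair f x)) ` unit_ball N)"
  using pair_bound by (intro bdd_aboveI2) auto

lemma pair_le_dual: "x \<in> unit_ball N \<Longrightarrow> norm (pair f x) \<le> dual_norm N f"
  unfolding dual_norm_def by (rule cSup_upper) (auto intro: bdd_pair)

lemma D_iff: "f \<in> dual_unit_ball N \<longleftrightarrow> (\<forall>x\<in>unit_ball N. norm (pair f x) \<le> 1)"
  unfolding dual_unit_ball_def dual_norm_def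
  using B_zero by (subst cSup_le_iff) (auto intro: bdd_pair)

lemma D_pair: "f \<in> dual_unit_ball N \<Longrightarrow> x \<in> unit_ball N \<Longrightarrow> norm (pair f x) \<le> 1"
  using D_iff by blast

lemma D_comp: "f \<in> dual_unit_ball N \<Longrightarrow> norm (f $ k) \<le> 1"
  using D_pair[OF _ axis_B] pair_axis by metis

lemma axis_D: "axis k 1 \<in> dual_unit_ball N"
  unfolding D_iff pair_axis2 using B_comp by blast

lemma pair_add_left: "pair (f + g) x = pair f x + pair g x"
  by (simp add: pair_def sum.distrib algebra_simps)

lemma pair_scaleR_left: "pair (u *\<^sub>R f) x = u *\<^sub>R pair f x"
  by (simp add: pair_def scaleR_sum_right)

lemma pair_sum_left: "pair (\<Sum>i\<in>I. f i) x = (\<Sum>i\<in>I. pair (f i) x)"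
  unfolding pair_def by (simp add: sum_distrib_right) (rule sum.swap)

lemma D_closed: "closed (dual_unit_ball N)"
proof -
  have "dual_unit_ball N = (\<Inter>x\<in>unit_ball N. {f. norm (pair f x) \<le> 1})"
    using D_iff by auto
  moreover have "closed {f. norm (pair f x) \<le> 1}" for x
    unfolding pair_def by (intro closed_Collect_le continuous_intros) 
  ultimately show ?thesis by auto
qed

lemma D_bounded: "bounded (dual_unit_ball N)"
proof -
  have "dual_unit_ball N \<subseteq> cball 0 (real CARD('n))"
  proof
    fix f assume f: "f \<in> dual_unit_ball N"
    have "norm f \<le> (\<Sum>i\<in>UNIV. norm (f $ i))"
      unfolding norm_vec_def by (rule L2_set_le_sum) simp
    also have "\<dots> \<le> (\<Sum>i\<in>(UNIV::'n set). 1)" using D_comp[OF f] by (intro sum_mono)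
    finally show "f \<in> cball 0 (real CARD('n))" by (simp add: dist_norm)
  qed
  then show ?thesis using bounded_cball bounded_subset by blast
qed

lemma D_compact: "compact (dual_unit_ball N)"
  using D_closed D_bounded compact_eq_bounded_closed by blast

lemma D_convex: "convex (dual_unit_ball N)"
  unfolding convex_def
proof (clarify)
  fix f g :: "'a^'n" and u v :: real
  assume f: "f \<in> dual_unit_ball N" and g: "g \<in> dual_unit_ball N" and uv: "0 \<le> u" "0 \<le> v" "u + v = 1"
  show "u *\<^sub>R f + v *\<^sub>R g \<in> dual_unit_ball N"
    unfolding D_iff
  proof
    fix x assume x: "x \<in> unit_ball N"
    have "norm (pair (u *\<^sub>R f + v *\<^sub>R g) x) \<le> u * norm (pair f x) + v * norm (pair g x)"
      using uv by (simp add: pair_add_left pair_scaleR_left norm_triangle_le)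
    also have "\<dots> \<le> u * 1 + v * 1"
      using D_pair[OF f x] D_pair[OF g x] uv by (intro add_mono mult_left_mono) auto
    finally show "norm (pair (u *\<^sub>R f + v *\<^sub>R g) x) \<le> 1" using uv by simp
  qed
qed


lemma B_dmul: "unimod d \<Longrightarrow> x \<in> unit_ball N \<Longrightarrow> dmul d x \<in> unit_ball N"
  unfolding unit_ball_def unimod_def
  by (simp add: N_cong[of "dmul d x" x] norm_mult)

lemma D_dmul: "unimod d \<Longrightarrow> f \<in> dual_unit_ball N \<Longrightarrow> dmul d f \<in> dual_unit_ball N"
  unfolding D_iff pair_dmul using B_dmul by blast

lemma extB: "unimod d \<Longrightarrow> y extreme_point_of unit_ball N \<Longrightarrow> dmul d y extreme_point_of unit_ball N"
  by (rule extreme_transfer[where T="dmul d" and T'="dmul (dinv d)", OF linear_dmul linear_dmul])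
     (auto simp: dmul_dinv1 dmul_dinv2 B_dmul unimod_dinv)

lemma extD: "unimod d \<Longrightarrow> y extreme_point_of dual_unit_ball N \<Longrightarrow> dmul d y extreme_point_of dual_unit_ball N"
  by (rule extreme_transfer[where T="dmul d" and T'="dmul (dinv d)", OF linear_dmul linear_dmul])
     (auto simp: dmul_dinv1 dmul_dinv2 D_dmul unimod_dinv)

lemma C2:
  assumes CL: "CL_space N" and f: "rvec F extreme_point_of dual_unit_ball N"
    and y: "rvec Y extreme_point_of unit_ball N" and F: "\<And>k. F k \<ge> 0" and Y: "\<And>k. Y k \<ge> 0"
  shows "(\<Sum>k\<in>UNIV. F k * Y k) = 1"
proof -
  have "norm (pair (rvec F) (rvec Y :: 'a^'n)) = 1" using CL f y unfolding CL_space_def by blast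
  then have "norm (of_real (\<Sum>k\<in>UNIV. F k * Y k) :: 'a) = 1" by (simp only: pair_rvec)
  moreover have "(\<Sum>k\<in>UNIV. F k * Y k) \<ge> 0" using F Y by (intro sum_nonneg) simp
  ultimately show ?thesis by (simp only: norm_of_real)
qed

lemma C3:
  assumes CL: "CL_space N" and f: "rvec F extreme_point_of dual_unit_ball N"
    and y: "rvec Y extreme_point_of unit_ball N" and F: "\<And>k. F k \<ge> 0" and Y: "\<And>k. Y k \<ge> 0"
  shows "F k * Y k = 0 \<or> F k * Y k = 1"
proof -
  define d :: "'a^'n" where "d = (\<chi> i. if i = k then -1 else 1)"
  have ud: "unimod d" by (simp add: unimod_def d_def)
  have e: "dmul d (rvec Y) = rvec (\<lambda>i. if i = k then - Y i else Y i)"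
    by (simp add: vec_eq_iff d_def)
  have "rvec (\<lambda>i. if i = k then - Y i else Y i) extreme_point_of unit_ball N"
    using extB[OF ud y] e by simp
  then have "norm (pair (rvec F) (rvec (\<lambda>i. if i = k then - Y i else Y i) :: 'a^'n)) = 1"
    using CL f unfolding CL_space_def by blast
  moreover have "(\<Sum>i\<in>UNIV. F i * (if i = k then - Y i else Y i)) = (\<Sum>i\<in>UNIV. F i * Y i) - 2 * (F k * Y k)"
  proof -
    have "(\<Sum>i\<in>UNIV. F i * (if i = k then - Y i else Y i)) = (\<Sum>i\<in>UNIV. F i * Y i - (if i = k then 2 * (F i * Y i) else 0))"
      by (rule sum.cong) auto
    also have "\<dots> = (\<Sum>i\<in>UNIV. F i * Y i) - 2 * (F k * Y k)"
      by (simp add: sum_subtractf)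
    finally show ?thesis .
  qed
  moreover have "(\<Sum>i\<in>UNIV. F i * Y i) = 1" by (rule C2[OF CL f y F Y])
  ultimately have "\<bar>1 - 2 * (F k * Y k)\<bar> = 1" by (simp only: pair_rvec norm_of_real)
  then show ?thesis by linarith
qed

lemma C4:
  "\<exists>F. rvec F extreme_point_of dual_unit_ball N \<and> (\<forall>i. F i \<ge> 0) \<and> F k = 1"
proof -
  have KM: "dual_unit_ball N = convex hull {f. f extreme_point_of dual_unit_ball N}"
    by (rule Krein_Milman_Minkowski[OF D_compact D_convex])
  have "\<exists>f. f extreme_point_of dual_unit_ball N \<and> inner (axis k 1) f \<ge> 1"
  proof (rule ccontr)
    assume "\<not> ?thesis"
    then have "{f. f extreme_point_of dual_unit_ball N} \<subseteq> {f. inner (axis k (1::'a)) f < 1}" by auto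
    then have "convex hull {f. f extreme_point_of dual_unit_ball N} \<subseteq> {f. inner (axis k (1::'a)) f < 1}"
      by (rule hull_minimal) (rule convex_halfspace_lt)
    then have "inner (axis k (1::'a)) (axis k 1) < 1" using axis_D KM by auto
    moreover have "inner (1::'a) 1 = 1" by (metis norm_one power2_norm_eq_inner power_one)
    ultimately show False by (simp add: inner_axis_axis)
  qed
  then obtain f where f: "f extreme_point_of dual_unit_ball N" and i1: "inner (1::'a) (f $ k) \<ge> 1"
    by (auto simp: inner_axis')
  have fD: "f \<in> dual_unit_ball N" using f extreme_point_of_def by blast
  have "inner (1::'a) (f $ k) \<le> norm (1::'a) * norm (f $ k)" by (rule norm_cauchy_schwarz)
  then have nk: "norm (f $ k) = 1" and "inner (1::'a) (f $ k) = norm (1::'a) * norm (f $ k)"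
    using D_comp[OF fD, of k] i1 by auto
  then have "norm (1::'a) *\<^sub>R f $ k = norm (f $ k) *\<^sub>R 1" using norm_cauchy_schwarz_eq by blast
  then have fk: "f $ k = 1" using nk by simp
  obtain d where d: "unimod d" "dmul d f = rvec (\<lambda>i. norm (f $ i))" using absify by blast
  have "rvec (\<lambda>i. norm (f $ i)) extreme_point_of dual_unit_ball N" using extD[OF d(1) f] d(2) by simp
  then show ?thesis using fk by (intro exI[of _ "\<lambda>i. norm (f $ i)"]) auto
qed

end

definition mon :: "('n::finite \<Rightarrow> nat) \<Rightarrow> 'a::real_normed_field ^ 'n \<Rightarrow> 'a" where
  "mon \<alpha> x = (\<Prod>i\<in>UNIV. (x $ i) ^ \<alpha> i)"

lemma finite_MI: "finite (multi_indices m :: ('n::finite \<Rightarrow> nat) set)"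
proof (rule finite_subset)
  show "multi_indices m \<subseteq> PiE (UNIV::'n set) (\<lambda>_. {..m})"
  proof
    fix \<alpha> :: "'n \<Rightarrow> nat" assume "\<alpha> \<in> multi_indices m"
    then have "\<alpha> i \<le> m" for i
      unfolding multi_indices_def using member_le_sum[of i UNIV \<alpha>] by auto
    then show "\<alpha> \<in> PiE UNIV (\<lambda>_. {..m})" by (auto simp: PiE_def extensional_def)
  qed
qed (rule finite_PiE, auto)

lemma homog_poly_mon: "homog_poly m Q \<longleftrightarrow> (\<exists>c. Q = (\<lambda>x. \<Sum>\<alpha>\<in>multi_indices m. c \<alpha> * mon \<alpha> x))"
  unfolding homog_poly_def mon_def ..

lemma mon_add: "mon (\<lambda>i. \<alpha> i + \<beta> i) x = mon \<alpha> x * mon \<beta> x"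
  unfolding mon_def by (simp add: power_add prod.distrib)

lemma homog_mult:
  fixes P R :: "'a::real_normed_field^'n::finite \<Rightarrow> 'a"
  assumes "homog_poly a P" "homog_poly b R"
  shows "homog_poly (a + b) (\<lambda>x. P x * R x)"
proof -
  obtain c where P: "P = (\<lambda>x. \<Sum>\<alpha>\<in>multi_indices a. c \<alpha> * mon \<alpha> x)"
    using assms(1) homog_poly_mon by blast
  obtain d where R: "R = (\<lambda>x. \<Sum>\<alpha>\<in>multi_indices b. d \<alpha> * mon \<alpha> x)"
    using assms(2) homog_poly_mon by blast
  define S where "S = (multi_indices a :: ('n \<Rightarrow> nat) set) \<times> (multi_indices b :: ('n \<Rightarrow> nat) set)"
  define pl where "pl = (\<lambda>p::('n \<Rightarrow> nat) \<times> ('n \<Rightarrow> nat). (\<lambda>i. fst p i + snd p i))"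
  define e where "e \<gamma> = (\<Sum>p\<in>{p\<in>S. pl p = \<gamma>}. c (fst p) * d (snd p))" for \<gamma>
  have finS: "finite S" unfolding S_def using finite_MI by blast
  have img: "pl ` S \<subseteq> multi_indices (a + b)"
    by (auto simp: S_def pl_def multi_indices_def sum.distrib)
  have "P x * R x = (\<Sum>\<gamma>\<in>multi_indices (a + b). e \<gamma> * mon \<gamma> x)" for x
  proof -
    have "P x * R x = (\<Sum>p\<in>S. c (fst p) * d (snd p) * mon (pl p) x)"
      unfolding P R S_def pl_def
      by (simp add: sum_product sum.cartesian_product mon_add algebra_simps) (rule sum.cong[OF refl], auto)
    also have "\<dots> = (\<Sum>\<gamma>\<in>multi_indices (a + b). \<Sum>p\<in>{p\<in>S. pl p = \<gamma>}. c (fst p) * d (snd p) * mon (pl p) x)"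
      by (rule sum.group[symmetric, OF finS finite_MI img])
    also have "\<dots> = (\<Sum>\<gamma>\<in>multi_indices (a + b). e \<gamma> * mon \<gamma> x)"
      unfolding e_def sum_distrib_right by (intro sum.cong refl) auto
    finally show ?thesis .
  qed
  then show ?thesis unfolding homog_poly_mon by (intro exI[of _ e]) (rule ext)
qed

lemma homog_add:
  assumes "homog_poly m P" "homog_poly m R"
  shows "homog_poly m (\<lambda>x. P x + R x)"
proof -
  obtain c where P: "P = (\<lambda>x. \<Sum>\<alpha>\<in>multi_indices m. c \<alpha> * mon \<alpha> x)"
    using assms(1) homog_poly_mon by blast
  obtain d where R: "R = (\<lambda>x. \<Sum>\<alpha>\<in>multi_indices m. d \<alpha> * mon \<alpha> x)"
    using assms(2) homog_poly_mon by blast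
  have "(\<lambda>x. P x + R x) = (\<lambda>x. \<Sum>\<alpha>\<in>multi_indices m. (c \<alpha> + d \<alpha>) * mon \<alpha> x)"
    unfolding P R by (simp add: sum.distrib algebra_simps)
  then show ?thesis unfolding homog_poly_mon by (rule exI[of _ "\<lambda>\<alpha>. c \<alpha> + d \<alpha>"])
qed

lemma homog_cmult:
  assumes "homog_poly m P"
  shows "homog_poly m (\<lambda>x. k * P x)"
proof -
  obtain c where P: "P = (\<lambda>x. \<Sum>\<alpha>\<in>multi_indices m. c \<alpha> * mon \<alpha> x)"
    using assms(1) homog_poly_mon by blast
  have "(\<lambda>x. k * P x) = (\<lambda>x. \<Sum>\<alpha>\<in>multi_indices m. (k * c \<alpha>) * mon \<alpha> x)"
    unfolding P by (simp add: sum_distrib_left algebra_simps)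
  then show ?thesis unfolding homog_poly_mon by (rule exI[of _ "\<lambda>\<alpha>. k * c \<alpha>"])
qed

lemma homog_zero: "homog_poly m (\<lambda>x. 0)"
  unfolding homog_poly_mon by (rule exI[of _ "\<lambda>_. 0"]) simp

lemma homog_sum:
  assumes "\<And>i. i \<in> I \<Longrightarrow> homog_poly m (P i)"
  shows "homog_poly m (\<lambda>x. \<Sum>i\<in>I. P i x)"
  using assms
proof (induction I rule: infinite_finite_induct)
  case (infinite A) then show ?case by (simp add: homog_zero)
next
  case empty then show ?case by (simp add: homog_zero)
next
  case (insert a A) then show ?case by (simp add: homog_add)
qed

lemma homog_one: "homog_poly 0 (\<lambda>x. 1)"
proof -
  have MI: "multi_indices 0 = {(\<lambda>_. 0) :: 'n::finite \<Rightarrow> nat}"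
    by (auto simp: multi_indices_def)
  show ?thesis unfolding homog_poly_mon MI
    by (rule exI[of _ "\<lambda>_. 1"]) (simp add: mon_def)
qed

lemma homog_linear: "homog_poly 1 (\<lambda>x. pair w x)"
proof -
  define ind where "ind k = (\<lambda>i. if i = k then 1 else 0 :: nat)" for k :: 'b
  have MI: "multi_indices 1 = range ind"
  proof
    show "range ind \<subseteq> multi_indices 1" by (auto simp: multi_indices_def ind_def)
    show "multi_indices 1 \<subseteq> range ind"
    proof
      fix \<alpha> :: "'b \<Rightarrow> nat" assume a: "\<alpha> \<in> multi_indices 1"
      then have s: "sum \<alpha> UNIV = 1" by (simp add: multi_indices_def)
      then obtain k where "\<alpha> k \<noteq> 0" by (metis sum.neutral zero_neq_one)
      have le: "\<alpha> i \<le> 1" for i using member_le_sum[of i UNIV \<alpha>] s by auto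
      have "\<alpha> k + sum \<alpha> (UNIV - {k}) = 1" using s by (metis sum.remove finite UNIV_I)
      then have "sum \<alpha> (UNIV - {k}) = 0" using \<open>\<alpha> k \<noteq> 0\<close> le[of k] by linarith
      then have "\<forall>i\<in>UNIV - {k}. \<alpha> i = 0" by simp
      then have "\<alpha> = ind k" using \<open>\<alpha> k \<noteq> 0\<close> le[of k] by (auto simp: ind_def fun_eq_iff)
      then show "\<alpha> \<in> range ind" by simp
    qed
  qed
  have inj: "inj ind" by (auto simp: inj_def ind_def fun_eq_iff split: if_splits)
  have mon_ind: "mon (ind k) x = x $ k" for k and x :: "'a^'b"
    unfolding mon_def ind_def by (simp add: power_0 if_distrib prod.If_cases)
  define c where "c \<alpha> = (if \<alpha> \<in> range ind then w $ (inv ind \<alpha>) else 0)" for \<alpha>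
  have "pair w x = (\<Sum>\<alpha>\<in>multi_indices 1. c \<alpha> * mon \<alpha> x)" for x
    unfolding MI pair_def
    by (subst sum.reindex[OF inj]) (simp add: c_def mon_ind inv_f_f[OF inj])
  then show ?thesis unfolding homog_poly_mon by (intro exI[of _ c]) (rule ext)
qed

lemma homog_prod:
  assumes "\<And>j. j < m \<Longrightarrow> homog_poly 1 (L j)"
  shows "homog_poly m (\<lambda>x. \<Prod>j<m. L j x)"
  using assms
proof (induction m)
  case 0 then show ?case by (simp add: homog_one)
next
  case (Suc m)
  have "homog_poly (m + 1) (\<lambda>x. (\<Prod>j<m. L j x) * L m x)"
    using Suc by (intro homog_mult) auto
  then show ?case by simp
qed


lemma ln_less_minus_one: "0 < (t::real) \<Longrightarrow> t \<noteq> 1 \<Longrightarrow> ln t < t - 1"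
proof -
  assume t: "0 < t" "t \<noteq> 1"
  have st: "0 < sqrt t" "sqrt t \<noteq> 1" using t by auto
  have "ln t = 2 * ln (sqrt t)" using t by (simp add: ln_sqrt)
  also have "\<dots> \<le> 2 * (sqrt t - 1)" using ln_le_minus_one[OF st(1)] by simp
  also have "\<dots> < t - 1"
  proof -
    have "0 < (sqrt t - 1)\<^sup>2" using st by simp
    then show ?thesis using t by (simp add: power2_eq_square algebra_simps)
  qed
  finally show ?thesis .
qed

lemma amgm1:
  fixes t :: "'j \<Rightarrow> real"
  assumes fin: "finite J" and nn: "\<And>j. j \<in> J \<Longrightarrow> 0 \<le> t j" and s: "sum t J \<le> real (card J)"
  shows "prod t J \<le> 1 \<and> (prod t J = 1 \<longrightarrow> (\<forall>j\<in>J. t j = 1))"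
proof (cases "\<exists>j\<in>J. t j = 0")
  case True
  then have "prod t J = 0" using fin by (simp add: prod_zero)
  then show ?thesis by simp
next
  case False
  then have pos: "\<And>j. j \<in> J \<Longrightarrow> 0 < t j" using nn by force
  have pe: "prod t J = exp (\<Sum>j\<in>J. ln (t j))"
    using fin pos by (simp add: exp_sum)
  have le: "(\<Sum>j\<in>J. ln (t j)) \<le> (\<Sum>j\<in>J. t j - 1)"
    using pos by (intro sum_mono ln_le_minus_one) auto
  have s0: "(\<Sum>j\<in>J. t j - 1) \<le> 0" using s by (simp add: sum_subtractf)
  have "prod t J \<le> 1" using le s0 pe by simp
  moreover have "prod t J = 1 \<longrightarrow> (\<forall>j\<in>J. t j = 1)"
  proof (intro impI ballI, rule ccontr)
    fix j assume p1: "prod t J = 1" and j: "j \<in> J" and tj: "t j \<noteq> 1"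
    have "(\<Sum>j\<in>J. ln (t j)) < (\<Sum>j\<in>J. t j - 1)"
      using fin pos j tj by (intro sum_strict_mono_ex1) (auto intro: ln_le_minus_one ln_less_minus_one)
    then have "prod t J < 1" using s0 pe by simp
    then show False using p1 by simp
  qed
  ultimately show ?thesis by blast
qed


locale thmctx = absn N for N :: "'a::{real_normed_field,euclidean_space} ^ 'n::finite \<Rightarrow> real" +
  fixes m :: nat and y :: "nat \<Rightarrow> 'a ^ 'n"
  assumes CL: "CL_space N" and mpos: "0 < m"
    and yext: "\<And>j. j < m \<Longrightarrow> y j extreme_point_of unit_ball N"
    and ynn: "\<And>j i. j < m \<Longrightarrow> \<exists>r::real. 0 \<le> r \<and> y j $ i = of_real r"
begin

definition Y :: "nat \<Rightarrow> 'n \<Rightarrow> real" where "Y j k = norm (y j $ k)"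

lemma Y_nonneg: "0 \<le> Y j k" by (simp add: Y_def)

lemma y_rvec: "j < m \<Longrightarrow> y j = rvec (Y j)"
proof -
  assume j: "j < m"
  have "y j $ i = of_real (Y j i)" for i
  proof -
    obtain r :: real where "0 \<le> r" "y j $ i = of_real r" using ynn[OF j] by blast
    then show ?thesis by (simp add: Y_def)
  qed
  then show ?thesis by (simp add: vec_eq_iff)
qed

lemma Yext: "j < m \<Longrightarrow> rvec (Y j) extreme_point_of unit_ball N"
  using yext y_rvec by metis

definition F :: "'n \<Rightarrow> 'n \<Rightarrow> real" where
  "F i = (SOME G. rvec G extreme_point_of dual_unit_ball N \<and> (\<forall>k. G k \<ge> 0) \<and> G i = 1)"

lemma F_props: "rvec (F i) extreme_point_of dual_unit_ball N \<and> (\<forall>k. F i k \<ge> 0) \<and> F i i = 1"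
proof -
  have e: "\<exists>G. rvec G extreme_point_of dual_unit_ball N \<and> (\<forall>k. G k \<ge> 0) \<and> G i = 1" by (rule C4)
  show ?thesis unfolding F_def by (rule someI_ex[OF e])
qed

lemma Fext: "rvec (F i) extreme_point_of dual_unit_ball N" and F_nonneg: "0 \<le> F i k" and F_ii: "F i i = 1"
  using F_props by auto

lemma FD: "rvec (F i) \<in> dual_unit_ball N"
  using Fext extreme_point_of_def by blast

lemma FY1: "j < m \<Longrightarrow> (\<Sum>k\<in>UNIV. F i k * Y j k) = 1"
  by (rule C2[OF CL Fext Yext]) (auto simp: F_nonneg Y_nonneg)

lemma FY01: "j < m \<Longrightarrow> F i k * Y j k = 0 \<or> F i k * Y j k = 1"
  by (rule C3[OF CL Fext Yext]) (auto simp: F_nonneg Y_nonneg)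

definition phi :: "'n \<Rightarrow> nat \<Rightarrow> 'n" where "phi i j = (SOME k. F i k * Y j k = 1)"

lemma phi_prop: "j < m \<Longrightarrow> F i k * Y j k = (if k = phi i j then 1 else 0)"
proof -
  assume j: "j < m"
  have ex: "\<exists>k. F i k * Y j k = 1"
  proof (rule ccontr)
    assume "\<not> ?thesis"
    then have "\<forall>k. F i k * Y j k = 0" using FY01[OF j] by blast
    then have "(\<Sum>k\<in>UNIV. F i k * Y j k) = 0" by (intro sum.neutral) blast
    then show False using FY1[OF j, of i] by simp
  qed
  then have p1: "F i (phi i j) * Y j (phi i j) = 1" unfolding phi_def by (rule someI_ex)
  show ?thesis
  proof (cases "k = phi i j")
    case True then show ?thesis using p1 by simp
  next
    case False
    show ?thesis
    proof (rule ccontr)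
      assume "F i k * Y j k \<noteq> (if k = phi i j then 1 else 0)"
      then have pk: "F i k * Y j k = 1" using FY01[OF j, of i k] False by auto
      have "(\<Sum>k'\<in>{k, phi i j}. F i k' * Y j k') \<le> (\<Sum>k'\<in>UNIV. F i k' * Y j k')"
        by (rule sum_mono2) (auto simp: F_nonneg Y_nonneg)
      then show False using pk p1 False FY1[OF j, of i] by simp
    qed
  qed
qed

definition a :: "'n \<Rightarrow> real" where "a k = (\<Sum>j<m. Y j k) / real m"

lemma a_nonneg: "0 \<le> a k" unfolding a_def by (intro divide_nonneg_nonneg sum_nonneg) (auto simp: Y_nonneg)

lemma Y_phi_pos: "j < m \<Longrightarrow> 0 < Y j (phi i j)"
proof -
  assume j: "j < m"
  have "F i (phi i j) * Y j (phi i j) = 1" using phi_prop[OF j] by simp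
  then have "Y j (phi i j) \<noteq> 0" by auto
  then show ?thesis using Y_nonneg by (simp add: order_le_neq_trans)
qed

lemma a_ge: "j < m \<Longrightarrow> Y j k / real m \<le> a k"
  unfolding a_def using mpos
  by (intro divide_right_mono member_le_sum) (auto simp: Y_nonneg)

lemma a_phi_pos: "j < m \<Longrightarrow> 0 < a (phi i j)"
  using a_ge[of j "phi i j"] Y_phi_pos[of j i] mpos
  by (meson divide_pos_pos of_nat_0_less_iff order_less_le_trans)

lemma a_pos_ex: "0 < a k \<Longrightarrow> \<exists>j<m. 0 < Y j k"
proof (rule ccontr)
  assume "0 < a k" "\<not> (\<exists>j<m. 0 < Y j k)"
  then have "\<forall>j<m. Y j k = 0" using Y_nonneg by (metis antisym not_less)
  then have "a k = 0" by (simp add: a_def)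
  then show False using \<open>0 < a k\<close> by simp
qed

lemma phi_self: "0 < a k \<Longrightarrow> \<exists>j<m. phi k j = k"
proof -
  assume "0 < a k"
  then obtain j where j: "j < m" "0 < Y j k" using a_pos_ex by blast
  have "F k k * Y j k = (if k = phi k j then 1 else 0)" by (rule phi_prop[OF j(1)])
  then have "k = phi k j" using j(2) F_ii by (auto split: if_splits)
  then show ?thesis using j by auto
qed

definition x0 :: "'a ^ 'n" where "x0 = rvec a"

definition A :: "'n \<Rightarrow> real" where "A i = (\<Prod>j<m. a (phi i j))"

lemma A_pos: "0 < A i" unfolding A_def by (intro prod_pos) (simp add: a_phi_pos)

definition M :: "'n \<Rightarrow> 'a ^ 'n \<Rightarrow> 'a" where "M i x = (\<Prod>j<m. x $ phi i j)"

definition G :: "'n \<Rightarrow> real" where "G k = (\<Sum>i\<in>UNIV. F i k) / real CARD('n)"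

lemma G_pos: "0 < G k"
proof -
  have "F k k \<le> (\<Sum>i\<in>UNIV. F i k)" by (rule member_le_sum) (auto simp: F_nonneg)
  then have "1 \<le> (\<Sum>i\<in>UNIV. F i k)" using F_ii by simp
  then show ?thesis unfolding G_def by simp
qed

definition g :: "'a ^ 'n" where "g = rvec G"

lemma g_D: "g \<in> dual_unit_ball N"
proof -
  have "g = (\<Sum>i\<in>UNIV. (1 / real CARD('n)) *\<^sub>R rvec (F i))"
    by (simp add: vec_eq_iff g_def G_def sum_divide_distrib scaleR_conv_of_real[where 'a='a] sum_distrib_left)
  also have "\<dots> \<in> dual_unit_ball N"
    by (rule convex_sum[OF _ D_convex]) (auto simp: FD)
  finally show ?thesis .
qed

lemma Ga: "(\<Sum>k\<in>UNIV. G k * a k) = 1"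
proof -
  define c where "c = real CARD('n) * real m"
  have c: "c \<noteq> 0" using mpos by (simp add: c_def)
  have "(\<Sum>k\<in>UNIV. G k * a k) = (\<Sum>k\<in>UNIV. (\<Sum>i\<in>UNIV. \<Sum>j<m. F i k * Y j k) / c)"
    by (intro sum.cong refl) (simp add: G_def a_def c_def sum_product)
  also have "\<dots> = (\<Sum>k\<in>UNIV. \<Sum>i\<in>UNIV. \<Sum>j<m. F i k * Y j k) / c"
    by (simp add: sum_divide_distrib)
  also have "(\<Sum>k\<in>UNIV. \<Sum>i\<in>UNIV. \<Sum>j<m. F i k * Y j k) = (\<Sum>i\<in>UNIV. \<Sum>k\<in>UNIV. \<Sum>j<m. F i k * Y j k)"
    by (rule sum.swap)
  also have "\<dots> = (\<Sum>i\<in>UNIV. \<Sum>j<m. \<Sum>k\<in>UNIV. F i k * Y j k)"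
    by (intro sum.cong refl sum.swap)
  also have "\<dots> = (\<Sum>i\<in>(UNIV::'n set). \<Sum>j<m. 1)"
    by (intro sum.cong refl) (simp add: FY1)
  also have "\<dots> = c" by (simp add: c_def)
  finally show ?thesis using c by simp
qed

lemma sum_delta_mult: "(\<Sum>k\<in>(UNIV::'n set). (if k = p then 1 else 0) * z k) = (z p :: real)"
proof -
  have "(\<Sum>k\<in>(UNIV::'n set). (if k = p then 1 else 0) * z k) = (\<Sum>k\<in>UNIV. if k = p then z k else 0)"
    by (rule sum.cong) auto
  then show ?thesis by simp
qed

lemma abs_B: "x \<in> unit_ball N \<Longrightarrow> rvec (\<lambda>k. norm (x $ k)) \<in> unit_ball N"
proof -
  assume x: "x \<in> unit_ball N"
  have "N (rvec (\<lambda>k. norm (x $ k)) :: 'a^'n) = N x" by (rule N_cong) simp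
  then show ?thesis using x by (simp add: unit_ball_def)
qed

lemma pair_abs_le:
  assumes f: "rvec Fv \<in> dual_unit_ball N" and Fv: "\<And>k. 0 \<le> Fv k" and x: "x \<in> unit_ball N"
  shows "(\<Sum>k\<in>UNIV. Fv k * norm (x $ k)) \<le> 1"
proof -
  have "norm (pair (rvec Fv) (rvec (\<lambda>k. norm (x $ k))) :: 'a) \<le> 1" by (rule D_pair[OF f abs_B[OF x]])
  then have "norm (of_real (\<Sum>k\<in>UNIV. Fv k * norm (x $ k)) :: 'a) \<le> 1" by (simp only: pair_rvec)
  moreover have "0 \<le> (\<Sum>k\<in>UNIV. Fv k * norm (x $ k))" by (intro sum_nonneg) (simp add: Fv)
  ultimately show ?thesis by (simp only: norm_of_real abs_of_nonneg)
qed

lemma sumY: "(\<Sum>j<m. Y j k) = real m * a k"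
  using mpos by (simp add: a_def)

lemma M_bound:
  assumes x: "x \<in> unit_ball N"
  shows "norm (M i x) \<le> A i \<and> (norm (M i x) = A i \<longrightarrow> (\<forall>j<m. norm (x $ phi i j) = a (phi i j)))"
proof -
  define t where "t j = norm (x $ phi i j) / a (phi i j)" for j
  have S1: "(\<Sum>k\<in>UNIV. F i k * norm (x $ k)) \<le> 1"
    by (rule pair_abs_le[OF FD _ x]) (simp add: F_nonneg)
  have tj: "t j = (\<Sum>k\<in>UNIV. F i k * Y j k * (norm (x $ k) / a k))" if "j < m" for j
  proof -
    have "(\<Sum>k\<in>UNIV. F i k * Y j k * (norm (x $ k) / a k)) = (\<Sum>k\<in>UNIV. (if k = phi i j then 1 else 0) * (norm (x $ k) / a k))"
      by (intro sum.cong refl) (simp only: phi_prop[OF that])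
    then show ?thesis by (simp only: sum_delta_mult t_def)
  qed
  have sumt: "(\<Sum>j<m. t j) \<le> real m"
  proof -
    have "(\<Sum>j<m. t j) = (\<Sum>j<m. \<Sum>k\<in>UNIV. F i k * Y j k * (norm (x $ k) / a k))" using tj by simp
    also have "\<dots> = (\<Sum>k\<in>UNIV. \<Sum>j<m. F i k * Y j k * (norm (x $ k) / a k))" by (rule sum.swap)
    also have "\<dots> = (\<Sum>k\<in>UNIV. F i k * (norm (x $ k) / a k) * (\<Sum>j<m. Y j k))"
      by (intro sum.cong refl) (simp add: sum_distrib_left sum_distrib_right sum_divide_distrib algebra_simps)
    also have "\<dots> = (\<Sum>k\<in>UNIV. F i k * (norm (x $ k) / a k) * (real m * a k))"
      by (simp add: sumY)
    also have "\<dots> \<le> (\<Sum>k\<in>UNIV. real m * (F i k * norm (x $ k)))"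
    proof (rule sum_mono)
      fix k
      show "F i k * (norm (x $ k) / a k) * (real m * a k) \<le> real m * (F i k * norm (x $ k))"
        by (cases "a k = 0") (simp_all add: F_nonneg)
    qed
    also have "\<dots> = real m * (\<Sum>k\<in>UNIV. F i k * norm (x $ k))" by (simp add: sum_distrib_left)
    also have "\<dots> \<le> real m * 1" using S1 by (intro mult_left_mono) auto
    finally show ?thesis by simp
  qed
  have tnn: "\<And>j. j \<in> {..<m} \<Longrightarrow> 0 \<le> t j" by (simp add: t_def a_nonneg)
  have am: "prod t {..<m} \<le> 1 \<and> (prod t {..<m} = 1 \<longrightarrow> (\<forall>j\<in>{..<m}. t j = 1))"
    using amgm1[of "{..<m}" t, OF finite_lessThan tnn] sumt by simp
  have nM: "norm (M i x) = A i * prod t {..<m}"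
  proof -
    have "norm (M i x) = (\<Prod>j<m. norm (x $ phi i j))" by (simp add: M_def prod_norm)
    also have "\<dots> = (\<Prod>j<m. a (phi i j) * t j)"
      by (intro prod.cong refl) (simp add: t_def a_phi_pos less_imp_neq[symmetric])
    also have "\<dots> = A i * prod t {..<m}" by (simp add: A_def prod.distrib)
    finally show ?thesis .
  qed
  have "norm (M i x) \<le> A i" using nM am A_pos[of i] by (simp add: mult_left_le)
  moreover have "norm (M i x) = A i \<longrightarrow> (\<forall>j<m. norm (x $ phi i j) = a (phi i j))"
  proof (intro impI allI)
    fix j assume e: "norm (M i x) = A i" and j: "j < m"
    then have "prod t {..<m} = 1" using nM A_pos[of i] by simp
    then have "t j = 1" using am j by auto
    then show "norm (x $ phi i j) = a (phi i j)" using a_phi_pos[OF j, of i] by (simp add: t_def)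
  qed
  ultimately show ?thesis by blast
qed

lemma x0_eq: "(of_real (1 / real m) :: 'a) *s (\<Sum>j<m. y j) = x0"
proof -
  have "(\<Sum>j<m. y j) = (\<Sum>j<m. rvec (Y j))" using y_rvec by simp
  then show ?thesis by (simp add: vec_eq_iff x0_def a_def)
qed

lemma x0_B: "x0 \<in> unit_ball N"
proof -
  have yB: "j < m \<Longrightarrow> y j \<in> unit_ball N" for j using yext extreme_point_of_def by blast
  have "N x0 = (1 / real m) * N (\<Sum>j<m. y j)" using x0_eq[symmetric] by (simp add: N_smult norm_divide)
  also have "\<dots> \<le> (1 / real m) * (\<Sum>j<m. N (y j))" by (intro mult_left_mono N_sum) auto
  also have "\<dots> \<le> (1 / real m) * (\<Sum>j<(m::nat). 1)"
    using yB by (intro mult_left_mono sum_mono) (auto simp: unit_ball_def)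
  also have "\<dots> = 1" using mpos by simp
  finally show ?thesis by (simp add: unit_ball_def)
qed

definition Qp :: "'a ^ 'n \<Rightarrow> 'a" where
  "Qp x = (\<Sum>i\<in>UNIV. of_real (1 / A i) * M i x) + (pair g x) ^ m"

lemma M_homog: "homog_poly m (M i)"
proof -
  have "M i = (\<lambda>x. \<Prod>j<m. pair (axis (phi i j) 1) x)"
    by (simp add: fun_eq_iff M_def pair_axis2)
  then show ?thesis by (simp only:) (rule homog_prod, rule homog_linear)
qed

lemma Q_homog: "homog_poly m Qp"
proof -
  have p: "(\<lambda>x. (pair g x) ^ m) = (\<lambda>x. \<Prod>j<m. pair g x)" by simp
  have "homog_poly m (\<lambda>x. (pair g x) ^ m)" unfolding p by (rule homog_prod) (rule homog_linear)
  moreover have "homog_poly m (\<lambda>x. \<Sum>i\<in>UNIV. of_real (1 / A i) * M i x)"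
    by (intro homog_sum homog_cmult M_homog)
  ultimately show ?thesis unfolding Qp_def[abs_def] by (rule homog_add[rotated])
qed

lemma M_x0: "M i x0 = of_real (A i)"
  by (simp add: M_def x0_def A_def of_real_prod)

lemma g_x0: "pair g x0 = 1"
  unfolding g_def x0_def pair_rvec Ga by simp

lemma Q_x0: "Qp x0 = of_nat CARD('n) + 1"
proof -
  have "of_real (1 / A i) * M i x0 = (1::'a)" for i
    using A_pos[of i] by (simp add: M_x0 of_real_mult[symmetric] del: of_real_mult)
  then show ?thesis by (simp add: Qp_def g_x0)
qed

lemma norm_Q_x0: "norm (Qp x0) = real CARD('n) + 1"
proof -
  have "Qp x0 = of_nat (CARD('n) + 1)" by (simp add: Q_x0)
  then show ?thesis by (simp only: norm_of_nat)
qed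

lemma Q_bound_parts: "x \<in> unit_ball N \<Longrightarrow>
   norm (Qp x) \<le> (\<Sum>i\<in>UNIV. norm (M i x) / A i) + norm (pair g x) ^ m"
proof -
  assume x: "x \<in> unit_ball N"
  have "norm (Qp x) \<le> norm (\<Sum>i\<in>UNIV. of_real (1 / A i) * M i x) + norm ((pair g x) ^ m)"
    unfolding Qp_def by (rule norm_triangle_ineq)
  also have "\<dots> \<le> (\<Sum>i\<in>UNIV. norm (of_real (1 / A i) * M i x)) + norm ((pair g x) ^ m)"
    by (intro add_right_mono norm_sum)
  also have "\<dots> = (\<Sum>i\<in>UNIV. norm (M i x) / A i) + norm (pair g x) ^ m"
    by (simp add: norm_mult norm_power norm_divide A_pos abs_of_pos)
  finally show ?thesis .
qed

lemma Q_bound: "x \<in> unit_ball N \<Longrightarrow> norm (Qp x) \<le> real CARD('n) + 1"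
proof -
  assume x: "x \<in> unit_ball N"
  have "(\<Sum>i\<in>UNIV. norm (M i x) / A i) \<le> (\<Sum>i\<in>(UNIV::'n set). 1)"
    using M_bound[OF x] A_pos by (intro sum_mono) (simp add: pos_divide_le_eq)
  moreover have "norm (pair g x) ^ m \<le> 1"
    using D_pair[OF g_D x] by (simp add: power_le_one)
  ultimately show ?thesis using Q_bound_parts[OF x] by simp
qed

lemma Q_norm: "poly_norm N Qp = real CARD('n) + 1"
  unfolding poly_norm_def
proof (rule cSup_eq_maximum)
  show "real CARD('n) + 1 \<in> (\<lambda>x. norm (Qp x)) ` unit_ball N"
    using x0_B norm_Q_x0 by (metis image_eqI)
  fix v assume "v \<in> (\<lambda>x. norm (Qp x)) ` unit_ball N"
  then show "v \<le> real CARD('n) + 1" using Q_bound by auto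
qed

lemma Q_max:
  assumes z: "z \<in> unit_ball N" and nz: "norm (Qp z) = real CARD('n) + 1"
  shows "\<exists>l. norm l = 1 \<and> z = l *s x0"
proof -
  define b where "b i = norm (M i z) / A i" for i
  define c where "c = norm (pair g z) ^ m"
  have b1: "b i \<le> 1" for i using M_bound[OF z, of i] A_pos[of i] by (simp add: b_def pos_divide_le_eq)
  have c1: "c \<le> 1" using D_pair[OF g_D z] by (simp add: c_def power_le_one)
  have "real CARD('n) + 1 \<le> (\<Sum>i\<in>UNIV. b i) + c"
    using Q_bound_parts[OF z] nz by (simp add: b_def c_def)
  then have le0: "(\<Sum>i\<in>UNIV. 1 - b i) + (1 - c) \<le> 0" by (simp add: sum_subtractf)
  have s1: "0 \<le> (\<Sum>i\<in>UNIV. 1 - b i)" using b1 by (intro sum_nonneg) auto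
  have c_1: "c = 1" using le0 s1 c1 by linarith
  have "(\<Sum>i\<in>UNIV. 1 - b i) = 0" using le0 s1 c1 by linarith
  then have "\<forall>i\<in>UNIV. 1 - b i = 0" using sum_nonneg_eq_0_iff[of UNIV "\<lambda>i. 1 - b i"] b1 by auto
  then have Mi: "norm (M i z) = A i" for i using A_pos[of i] by (simp add: b_def)
  have lg: "norm (pair g z) = 1"
  proof -
    have "norm (pair g z) ^ m = 1" using c_1 by (simp add: c_def)
    then have "norm (norm (pair g z)) = 1" using power_eq_1_iff mpos by blast
    then show ?thesis by simp
  qed
  have zpos: "norm (z $ k) = a k" if apos: "0 < a k" for k
  proof -
    obtain j where j: "j < m" "phi k j = k" using phi_self[OF apos] by blast
    then show ?thesis using M_bound[OF z, of k] Mi[of k] by metis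
  qed
  have Gnn: "\<And>k. 0 \<le> G k" using G_pos less_imp_le by blast
  have zall: "norm (z $ k) = a k" for k
  proof -
    have S1: "(\<Sum>k\<in>UNIV. G k * norm (z $ k)) \<le> 1"
      by (rule pair_abs_le[OF _ Gnn z]) (use g_D in \<open>simp add: g_def\<close>)
    have tnn: "0 \<le> G k * norm (z $ k) - G k * a k" for k
    proof (cases "0 < a k")
      case True then show ?thesis using zpos by simp
    next
      case False then have "a k = 0" using a_nonneg[of k] by simp
      then show ?thesis using Gnn[of k] by simp
    qed
    have "(\<Sum>k\<in>UNIV. G k * norm (z $ k) - G k * a k) \<le> 0"
      using S1 Ga by (simp add: sum_subtractf)
    moreover have "0 \<le> (\<Sum>k\<in>UNIV. G k * norm (z $ k) - G k * a k)" using tnn by (intro sum_nonneg)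
    ultimately have "(\<Sum>k\<in>UNIV. G k * norm (z $ k) - G k * a k) = 0" by linarith
    then have "G k * norm (z $ k) - G k * a k = 0"
      using sum_nonneg_eq_0_iff[of UNIV "\<lambda>k. G k * norm (z $ k) - G k * a k"] tnn by auto
    then show ?thesis using G_pos[of k] by (simp add: right_diff_distrib[symmetric])
  qed
  define l where "l = pair g z"
  have nl: "norm l = 1" using lg by (simp add: l_def)
  have pg: "pair g z = (\<Sum>k\<in>UNIV. G k *\<^sub>R z $ k)"
    by (simp add: pair_def g_def scaleR_conv_of_real)
  have ll: "inner l l = 1" using nl by (simp add: power2_norm_eq_inner[symmetric])
  have "inner l l = inner l (\<Sum>k\<in>UNIV. G k *\<^sub>R z $ k)" using pg by (simp add: l_def)
  also have "\<dots> = (\<Sum>k\<in>UNIV. G k * inner l (z $ k))" by (simp add: inner_sum_right)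
  finally have s_in: "(\<Sum>k\<in>UNIV. G k * inner l (z $ k)) = 1" using ll by simp
  have ile: "inner l (z $ k) \<le> a k" for k
    using norm_cauchy_schwarz[of l "z $ k"] nl zall[of k] by simp
  have tnn2: "0 \<le> G k * a k - G k * inner l (z $ k)" for k
    using ile[of k] Gnn[of k] by (simp add: right_diff_distrib[symmetric])
  have "(\<Sum>k\<in>UNIV. G k * a k - G k * inner l (z $ k)) = 0"
    using Ga s_in by (simp add: sum_subtractf)
  then have "G k * a k - G k * inner l (z $ k) = 0" for k
    using sum_nonneg_eq_0_iff[of UNIV "\<lambda>k. G k * a k - G k * inner l (z $ k)"] tnn2 by auto
  then have "G k * (a k - inner l (z $ k)) = 0" for k by (simp add: right_diff_distrib)
  then have "a k - inner l (z $ k) = 0" for k using G_pos[of k] by (metis mult_eq_0_iff less_irrefl)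
  then have ie: "inner l (z $ k) = norm l * norm (z $ k)" for k
    using nl zall[of k] by simp
  have "z $ k = (l *s x0) $ k" for k
  proof -
    have "norm l *\<^sub>R z $ k = norm (z $ k) *\<^sub>R l" using ie[of k] norm_cauchy_schwarz_eq by blast
    then have "z $ k = a k *\<^sub>R l" using nl zall[of k] by simp
    then show ?thesis by (simp add: x0_def scaleR_conv_of_real mult.commute)
  qed
  then have "z = l *s x0" by (simp add: vec_eq_iff)
  then show ?thesis using nl by blast
qed

lemma Q_cont: "continuous_on UNIV Qp"
  unfolding Qp_def[abs_def] M_def pair_def by (intro continuous_intros)

lemma Q_nz: "Qp \<noteq> (\<lambda>_. 0)"
proof
  assume "Qp = (\<lambda>_. 0)"
  then have "norm (Qp x0) = 0" by simp
  then show False using norm_Q_x0 by simp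
qed

lemma Q_strong: "strongly_attains_at N Qp x0"
  unfolding strongly_attains_at_def
proof (intro conjI allI impI)
  show "x0 \<in> unit_ball N" by (rule x0_B)
  show "Qp \<noteq> (\<lambda>_. 0)" by (rule Q_nz)
  fix s :: "nat \<Rightarrow> 'a ^ 'n"
  assume H: "(\<forall>k. s k \<in> unit_ball N) \<and> (\<lambda>k. norm (Qp (s k))) \<longlonglongrightarrow> poly_norm N Qp"
  obtain z r where z: "z \<in> unit_ball N" and r: "strict_mono r" and lim: "(s \<circ> r) \<longlonglongrightarrow> z"
    using seq_compactE[OF compact_imp_seq_compact[OF B_compact]] H by metis
  have c: "isCont Qp z" using Q_cont continuous_on_eq_continuous_at open_UNIV by blast
  have "(\<lambda>k. norm (Qp ((s \<circ> r) k))) \<longlonglongrightarrow> norm (Qp z)"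
    by (intro tendsto_norm isCont_tendsto_compose[OF c lim])
  moreover have "(\<lambda>k. norm (Qp ((s \<circ> r) k))) \<longlonglongrightarrow> poly_norm N Qp"
    using LIMSEQ_subseq_LIMSEQ[OF conjunct2[OF H] r] by (simp add: o_def)
  ultimately have "norm (Qp z) = poly_norm N Qp" by (rule LIMSEQ_unique)
  then obtain l where l: "norm l = 1" "z = l *s x0" using Q_max[OF z] Q_norm by auto
  show "\<exists>l. norm l = 1 \<and> (\<exists>r. strict_mono r \<and> (s \<circ> r) \<longlonglongrightarrow> l *s x0)"
    using l r lim by blast
qed

lemma x0_rho: "x0 \<in> rho_tilde N m"
  unfolding rho_tilde_def using Q_homog Q_nz Q_strong by blast

end

lemma generic: "thm45_claim TYPE('a::{real_normed_field,euclidean_space}) TYPE('n::finite)"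
  unfolding thm45_claim_def
proof (intro allI impI)
  fix N :: "'a ^ 'n \<Rightarrow> real" and m :: nat and y :: "nat \<Rightarrow> 'a ^ 'n"
  assume h: "absolute_norm N" "CL_space N" "0 < m"
    "\<forall>j<m. y j extreme_point_of unit_ball N \<and> (\<forall>i. \<exists>r::real. 0 \<le> r \<and> y j $ i = of_real r)"
  interpret thmctx N m y
    by unfold_locales (use h in auto)
  show "(of_real (1 / real m) :: 'a) *s (\<Sum>j<m. y j) \<in> rho_tilde N m"
    using x0_eq x0_rho by simp
qed

theorem theorem4p5:
  shows "thm45_claim TYPE(real) TYPE('n::finite) \<and> thm45_claim TYPE(complex) TYPE('n::finite)"
  using generic[where 'a=real and 'n='n] generic[where 'a=complex and 'n='n] by blast

end
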